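(* There exists a non-convex polyhedron $P \subset \mathbb{R}^3$ whose surface $\partial P$ is isometric to the surface $\partial C$ of a cube $C$ with $\operatorname{vol}(C) < \operatorname{vol}(P)$. Equivalently, for the unit cube $C=[0,1]^3$ there is a non-convex polyhedron $P$ with $\partial P$ isometric to $\partial C$ and $\operatorname{vol}(P) > 1$. *)

theory Defs
  imports "HOL-Analysis.Analysis"
begin

definition path_length :: "(real \<Rightarrow> 'a::metric_space) \<Rightarrow> ereal" where
  "path_length g = (SUP (n, t) \<in> {(n::nat, t::nat \<Rightarrow> real). t 0 = 0 \<and> t n = 1 \<and> (\<forall>i<n. t i \<le> t (Suc i))}.
      ereal (\<Sum>i<n. dist (g (t i)) (g (t (Suc i)))))"

definition intrinsic_dist :: "'a::metric_space set \<Rightarrow> 'a \<Rightarrow> 'a \<Rightarrow> ereal" where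
  "intrinsic_dist S x y = (INF g \<in> {g. path g \<and> path_image g \<subseteq> S \<and> pathstart g = x \<and> pathfinish g = y}.
      path_length g)"

definition intrinsically_isometric :: "'a::metric_space set \<Rightarrow> 'b::metric_space set \<Rightarrow> bool" where
  "intrinsically_isometric S T \<longleftrightarrow> (\<exists>f. bij_betw f S T \<and>
      (\<forall>x\<in>S. \<forall>y\<in>S. intrinsic_dist T (f x) (f y) = intrinsic_dist S x y))"

definition polyhedron3 :: "(real^3) set \<Rightarrow> bool" where
  "polyhedron3 P \<longleftrightarrow> (\<exists>F. finite F \<and> F \<noteq> {} \<and> (\<forall>Q\<in>F. polytope Q \<and> aff_dim Q = 3) \<and> P = \<Union>F)"

definition unit_cube3 :: "(real^3) set" where
  "unit_cube3 = {x. \<forall>i. 0 \<le> x $ i \<and> x $ i \<le> 1}"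

end

theory Submission
  imports Defs
begin


definition chainsum :: "(real \<Rightarrow> 'a::metric_space) \<Rightarrow> real \<Rightarrow> real \<Rightarrow> real \<Rightarrow> bool" where
  "chainsum g a b r \<longleftrightarrow> (\<exists>n t. t 0 = a \<and> t n = b \<and> (\<forall>i<n. t i \<le> t (Suc i)) \<and>
      r \<le> (\<Sum>i<n. dist (g (t i)) (g (t (Suc i)))))"

lemma chainsum_mono: "chainsum g a b r \<Longrightarrow> r' \<le> r \<Longrightarrow> chainsum g a b r'"
  unfolding chainsum_def by (blast intro: order_trans)

lemma chainsum_single: "a \<le> b \<Longrightarrow> chainsum g a b (dist (g a) (g b))"
  unfolding chainsum_def
  by (rule exI[of _ 1], rule exI[of _ "\<lambda>i. if i = 0 then a else b"]) auto

lemma chainsum_refl: "chainsum g a a 0"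
  unfolding chainsum_def by (rule exI[of _ 0], rule exI[of _ "\<lambda>i. a"]) auto

lemma chainsum_concat:
  assumes "chainsum g a s r1" "chainsum g s b r2"
  shows "chainsum g a b (r1 + r2)"
proof -
  obtain n1 t1 where t1: "t1 0 = a" "t1 n1 = s" "\<forall>i<n1. t1 i \<le> t1 (Suc i)"
    "r1 \<le> (\<Sum>i<n1. dist (g (t1 i)) (g (t1 (Suc i))))"
    using assms(1) unfolding chainsum_def by blast
  obtain n2 t2 where t2: "t2 0 = s" "t2 n2 = b" "\<forall>i<n2. t2 i \<le> t2 (Suc i)"
    "r2 \<le> (\<Sum>i<n2. dist (g (t2 i)) (g (t2 (Suc i))))"
    using assms(2) unfolding chainsum_def by blast
  define t where "t i = (if i \<le> n1 then t1 i else t2 (i - n1))" for i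
  have tl: "t i = t1 i" if "i \<le> n1" for i using that by (simp add: t_def)
  have tr: "t (n1 + i) = t2 i" for i by (cases i) (auto simp: t_def t1 t2)
  have sum_split: "(\<Sum>i<n1+m. dist (g (t i)) (g (t (Suc i)))) =
     (\<Sum>i<n1. dist (g (t1 i)) (g (t1 (Suc i)))) + (\<Sum>i<m. dist (g (t2 i)) (g (t2 (Suc i))))" for m
  proof (induction m)
    case 0
    then show ?case by (auto intro!: sum.cong simp: tl)
  next
    case (Suc m)
    have "t (n1 + m) = t2 m" "t (Suc (n1 + m)) = t2 (Suc m)"
      using tr[of m] tr[of "Suc m"] by auto
    then show ?case using Suc by simp
  qed
  show ?thesis unfolding chainsum_def
  proof (intro exI conjI)
    show "t 0 = a" using t1 by (simp add: t_def)
    show "t (n1 + n2) = b" using tr[of n2] t2 by simp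
    show "\<forall>i<n1 + n2. t i \<le> t (Suc i)"
    proof (intro allI impI)
      fix i assume i: "i < n1 + n2"
      show "t i \<le> t (Suc i)"
      proof (cases "i < n1")
        case True then show ?thesis using t1 by (simp add: tl)
      next
        case False
        then obtain k where k: "i = n1 + k" "k < n2" using i by (metis add_less_imp_less_left le_Suc_ex not_less)
        then show ?thesis using tr[of k] tr[of "Suc k"] t2 by simp
      qed
    qed
    show "r1 + r2 \<le> (\<Sum>i<n1 + n2. dist (g (t i)) (g (t (Suc i))))"
      using sum_split[of n2] t1 t2 by simp
  qed
qed

lemma chain_exists:
  fixes g :: "real \<Rightarrow> 'a::metric_space" and h :: "'a \<Rightarrow> 'b::metric_space"
  assumes g: "continuous_on {0..1} g"
    and iso: "\<And>A x y. A \<in> \<A> \<Longrightarrow> x \<in> A \<Longrightarrow> y \<in> A \<Longrightarrow> dist (h x) (h y) \<le> dist x y"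
    and cl: "\<And>A. A \<in> \<A> \<Longrightarrow> closed A"
  shows "finite \<A>' \<Longrightarrow> \<A>' \<subseteq> \<A> \<Longrightarrow> 0 \<le> a \<Longrightarrow> a \<le> b \<Longrightarrow> b \<le> 1 \<Longrightarrow> g ` {a..b} \<subseteq> \<Union>\<A>' \<Longrightarrow>
     chainsum g a b (dist (h (g a)) (h (g b)))"
proof (induction "card \<A>'" arbitrary: \<A>' a rule: less_induct)
  case less
  have "a \<in> {a..b}" using less.prems by simp
  then have "g a \<in> \<Union>\<A>'" using less.prems(6) by blast
  then obtain A where A: "A \<in> \<A>'" "g a \<in> A" by auto
  have Acl: "closed A" using A less.prems cl by auto
  define Z where "Z = {a..b} \<inter> g -` A"
  have gab: "continuous_on {a..b} g" using g less.prems by (auto intro: continuous_on_subset)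
  have "closed Z" unfolding Z_def by (rule continuous_closed_preimage[OF gab]) (auto simp: Acl)
  then have "compact Z" unfolding Z_def by (meson bounded_Int bounded_closed_interval compact_eq_bounded_closed)
  moreover have "a \<in> Z" using A less.prems by (auto simp: Z_def)
  ultimately obtain s where s: "s \<in> Z" "\<forall>t\<in>Z. t \<le> s" using compact_attains_sup by blast
  have sab: "a \<le> s" "s \<le> b" "g s \<in> A" using s by (auto simp: Z_def)
  show ?case
  proof (cases "s = b")
    case True
    have "dist (h (g a)) (h (g b)) \<le> dist (g a) (g b)"
      using iso[of A "g a" "g b"] A less.prems True sab by auto
    then show ?thesis using chainsum_single[OF \<open>a \<le> b\<close>] chainsum_mono by blast
  next
    case False
    then have sb: "s < b" using sab by auto
    define B where "B = \<A>' - {A}"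
    have finB: "finite B" using less.prems by (simp add: B_def)
    have clB: "closed (\<Union>B)" using finB less.prems cl by (auto simp: B_def intro!: closed_Union)
    have gt: "g t \<in> \<Union>B" if "t \<in> {s<..b}" for t
    proof -
      have "t \<notin> Z" using s that by force
      moreover have "t \<in> {a..b}" using that sab by auto
      ultimately have "g t \<notin> A" by (auto simp: Z_def)
      moreover have "g t \<in> \<Union>\<A>'" using less.prems(6) \<open>t \<in> {a..b}\<close> by blast
      ultimately show ?thesis by (auto simp: B_def)
    qed
    define W where "W = {s..b} \<inter> g -` \<Union>B"
    have gsb: "continuous_on {s..b} g" using g less.prems sab by (auto intro: continuous_on_subset)
    have "closed W" unfolding W_def by (rule continuous_closed_preimage[OF gsb]) (auto simp: clB)
    moreover have "{s<..b} \<subseteq> W" using gt by (auto simp: W_def)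
    ultimately have "closure {s<..b} \<subseteq> W" by (rule closure_minimal[rotated])
    then have sbW: "{s..b} \<subseteq> W" using closure_greaterThanAtMost[OF sb] by simp
    then have "g ` {s..b} \<subseteq> \<Union>B" by (auto simp: W_def)
    moreover have "card B < card \<A>'" unfolding B_def using card_Diff1_less[OF less.prems(1) A(1)] .
    ultimately have c2: "chainsum g s b (dist (h (g s)) (h (g b)))"
      using less.hyps[of B s] finB less.prems sab by (auto simp: B_def)
    have "dist (h (g a)) (h (g s)) \<le> dist (g a) (g s)"
      using iso[of A "g a" "g s"] A less.prems sab by auto
    then have c1: "chainsum g a s (dist (h (g a)) (h (g s)))"
      using chainsum_single[OF \<open>a \<le> s\<close>] chainsum_mono by blast
    show ?thesis
      by (rule chainsum_mono[OF chainsum_concat[OF c1 c2]]) (rule dist_triangle)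
  qed
qed

lemma mono_bounds:
  fixes t :: "nat \<Rightarrow> real"
  assumes "\<forall>k<n. t k \<le> t (Suc k)"
  shows "i \<le> j \<Longrightarrow> j \<le> n \<Longrightarrow> t i \<le> t j"
proof (induction j)
  case 0 then show ?case by simp
next
  case (Suc j)
  show ?case
  proof (cases "i = Suc j")
    case True then show ?thesis by simp
  next
    case False
    then have "t i \<le> t j" using Suc by auto
    also have "t j \<le> t (Suc j)" using assms Suc by auto
    finally show ?thesis .
  qed
qed

lemma path_length_le:
  fixes g :: "real \<Rightarrow> 'a::metric_space" and h :: "'a \<Rightarrow> 'b::metric_space"
  assumes "path g" "path_image g \<subseteq> \<Union>\<A>" "finite \<A>"
    and iso: "\<And>A x y. A \<in> \<A> \<Longrightarrow> x \<in> A \<Longrightarrow> y \<in> A \<Longrightarrow> dist (h x) (h y) \<le> dist x y"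
    and cl: "\<And>A. A \<in> \<A> \<Longrightarrow> closed A"
  shows "path_length (h \<circ> g) \<le> path_length g"
  unfolding path_length_def[of "h \<circ> g"]
proof (rule SUP_least)
  fix nt :: "nat \<times> (nat \<Rightarrow> real)" assume "nt \<in> {(n, t). t 0 = 0 \<and> t n = 1 \<and> (\<forall>i<n. t i \<le> t (Suc i))}"
  then obtain n t where nt: "nt = (n, t)" "t 0 = 0" "t n = 1" "\<forall>i<n. t i \<le> t (Suc i)" by auto
  have bnd: "0 \<le> t i \<and> t i \<le> 1" if "i \<le> n" for i
    using mono_bounds[of n t 0 i] mono_bounds[of n t i n] that nt by auto
  have gc: "continuous_on {0..1} g" using assms(1) by (simp add: path_def)
  have "m \<le> n \<Longrightarrow> chainsum g 0 (t m) (\<Sum>i<m. dist ((h \<circ> g) (t i)) ((h \<circ> g) (t (Suc i))))" for m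
  proof (induction m)
    case 0 then show ?case using nt chainsum_refl by simp
  next
    case (Suc m)
    have "g ` {t m..t (Suc m)} \<subseteq> \<Union>\<A>"
      using assms(2) bnd[of m] bnd[of "Suc m"] Suc.prems by (auto simp: path_image_def)
    then have "chainsum g (t m) (t (Suc m)) (dist (h (g (t m))) (h (g (t (Suc m)))))"
      using chain_exists[OF gc iso cl, where \<A>'=\<A> and a="t m" and b="t (Suc m)"] assms(3) bnd[of m] bnd[of "Suc m"]
        Suc.prems nt(4) by auto
    then show ?case using chainsum_concat[OF Suc.IH] Suc.prems by simp
  qed
  from this[of n] obtain k u where ku: "u 0 = 0" "u k = 1" "\<forall>i<k. u i \<le> u (Suc i)"
    "(\<Sum>i<n. dist ((h \<circ> g) (t i)) ((h \<circ> g) (t (Suc i)))) \<le> (\<Sum>i<k. dist (g (u i)) (g (u (Suc i))))"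
    unfolding chainsum_def using nt by auto
  have "ereal (\<Sum>i<n. dist ((h \<circ> g) (t i)) ((h \<circ> g) (t (Suc i)))) \<le> ereal (\<Sum>i<k. dist (g (u i)) (g (u (Suc i))))"
    using ku by simp
  also have "\<dots> \<le> path_length g"
    unfolding path_length_def
    by (rule SUP_upper2[of "(k, u)"]) (use ku in auto)
  finally show "(case nt of (n, t) \<Rightarrow> ereal (\<Sum>i<n. dist ((h \<circ> g) (t i)) ((h \<circ> g) (t (Suc i))))) \<le> path_length g"
    using nt by simp
qed

lemma intrinsic_le:
  fixes h :: "'a::metric_space \<Rightarrow> 'b::metric_space"
  assumes hS: "h ` S \<subseteq> T" and fin: "finite \<A>" and cov: "\<Union>\<A> = S"
    and iso: "\<And>A x y. A \<in> \<A> \<Longrightarrow> x \<in> A \<Longrightarrow> y \<in> A \<Longrightarrow> dist (h x) (h y) \<le> dist x y"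
    and cl: "\<And>A. A \<in> \<A> \<Longrightarrow> closed A"
  shows "intrinsic_dist T (h x) (h y) \<le> intrinsic_dist S x y"
  unfolding intrinsic_dist_def[of S]
proof (rule INF_greatest)
  fix g assume g: "g \<in> {g. path g \<and> path_image g \<subseteq> S \<and> pathstart g = x \<and> pathfinish g = y}"
  have "continuous_on (\<Union>A\<in>\<A>. A) h"
  proof (rule continuous_on_closed_Union[OF fin cl])
    fix A assume "A \<in> \<A>"
    then have "1-lipschitz_on A h" using iso by (auto simp: lipschitz_on_def)
    then show "continuous_on A h" by (rule lipschitz_on_continuous_on)
  qed
  then have hc: "continuous_on S h" using cov by simp
  have "path (h \<circ> g)" using g hc unfolding path_def path_image_def
    by (auto intro: continuous_on_compose2[OF hc])
  moreover have "path_image (h \<circ> g) \<subseteq> T" using g hS by (auto simp: path_image_compose)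
  moreover have "pathstart (h \<circ> g) = h x" "pathfinish (h \<circ> g) = h y" using g
    by (auto simp: pathstart_compose pathfinish_compose)
  ultimately have "intrinsic_dist T (h x) (h y) \<le> path_length (h \<circ> g)"
    unfolding intrinsic_dist_def by (intro INF_lower) auto
  also have "\<dots> \<le> path_length g"
    using path_length_le[of g \<A> h] g cov fin iso cl by auto
  finally show "intrinsic_dist T (h x) (h y) \<le> path_length g" .
qed

lemma pw_iso_intrinsically_isometric:
  fixes h :: "'a::metric_space \<Rightarrow> 'b::metric_space"
  assumes bij: "bij_betw h S T" and fin: "finite \<A>" and cov: "\<Union>\<A> = S"
    and cpt: "\<And>A. A \<in> \<A> \<Longrightarrow> compact A"
    and iso: "\<And>A x y. A \<in> \<A> \<Longrightarrow> x \<in> A \<Longrightarrow> y \<in> A \<Longrightarrow> dist (h x) (h y) = dist x y"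
  shows "intrinsically_isometric T S"
proof -
  define f where "f = inv_into S h"
  have bf: "bij_betw f T S" unfolding f_def by (rule bij_betw_inv_into[OF bij])
  have inj: "inj_on h S" and hST: "h ` S = T" using bij by (auto simp: bij_betw_def)
  have fh: "f (h x) = x" if "x \<in> S" for x unfolding f_def using inj that by (rule inv_into_f_f)
  have hf: "h (f u) = u" if "u \<in> T" for u unfolding f_def using that hST by (auto intro: f_inv_into_f)
  have le1: "intrinsic_dist T (h x) (h y) \<le> intrinsic_dist S x y" for x y
    by (rule intrinsic_le[OF _ fin cov]) (use hST iso cpt compact_imp_closed in \<open>auto intro: compact_imp_closed cpt\<close>)
  have AS: "A \<subseteq> S" if "A \<in> \<A>" for A using cov that by auto
  have hcA: "continuous_on A h" if "A \<in> \<A>" for A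
  proof -
    have "1-lipschitz_on A h" using iso that by (auto simp: lipschitz_on_def)
    then show ?thesis by (rule lipschitz_on_continuous_on)
  qed
  have le2: "intrinsic_dist S (f u) (f v) \<le> intrinsic_dist T u v" for u v
  proof (rule intrinsic_le[of f T S "(`) h ` \<A>"])
    show "f ` T \<subseteq> S" using bf by (auto simp: bij_betw_def)
    show "finite ((`) h ` \<A>)" using fin by simp
    show "\<Union> ((`) h ` \<A>) = T" using cov hST by auto
    show "dist (f x) (f y) \<le> dist x y" if H: "A \<in> (`) h ` \<A>" "x \<in> A" "y \<in> A" for A x y
    proof -
      obtain B where B: "B \<in> \<A>" "A = h ` B" using H by auto
      obtain a b where ab: "a \<in> B" "b \<in> B" "x = h a" "y = h b" using B H by auto
      have "a \<in> S" "b \<in> S" using AS[OF B(1)] ab by auto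
      then show ?thesis using fh[of a] fh[of b] iso[OF B(1) ab(1,2)] ab by simp
    qed
    show "closed A" if "A \<in> (`) h ` \<A>" for A
      using that cpt hcA by (auto intro!: compact_imp_closed compact_continuous_image)
  qed
  show ?thesis unfolding intrinsically_isometric_def
  proof (intro exI conjI ballI)
    show "bij_betw f T S" by (rule bf)
    fix u v assume uv: "u \<in> T" "v \<in> T"
    have "intrinsic_dist T u v = intrinsic_dist T (h (f u)) (h (f v))" using hf uv by simp
    also have "\<dots> \<le> intrinsic_dist S (f u) (f v)" by (rule le1)
    finally show "intrinsic_dist S (f u) (f v) = intrinsic_dist T u v" using le2[of u v] by simp
  qed
qed


lemma frontier_image_inj:
  fixes G :: "'a::euclidean_space \<Rightarrow> 'a"
  assumes cont: "continuous_on UNIV G" and inj: "inj G" and K: "compact K"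
  shows "frontier (G ` K) = G ` frontier K"
proof -
  have clK: "closed K" using K by (rule compact_imp_closed)
  have clGK: "closed (G ` K)" using K cont by (auto intro: compact_imp_closed compact_continuous_image continuous_on_subset)
  have sub1: "G ` interior K \<subseteq> interior (G ` K)"
  proof (rule interior_maximal)
    show "G ` interior K \<subseteq> G ` K" using interior_subset by blast
    show "open (G ` interior K)"
      by (rule invariance_of_domain) (use cont inj in \<open>auto intro: continuous_on_subset inj_on_subset\<close>)
  qed
  have disj: "G p \<notin> interior (G ` K)" if p: "p \<in> frontier K" for p
  proof
    assume Gp: "G p \<in> interior (G ` K)"
    have "open (G -` interior (G ` K))"
      using cont by (simp add: continuous_on_open_vimage)
    moreover have "p \<in> G -` interior (G ` K)" using Gp by simp
    moreover have "p \<in> closure (- K)" using p by (simp add: frontier_def closure_complement)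
    ultimately obtain q where q: "q \<in> - K" "q \<in> G -` interior (G ` K)"
      using open_Int_closure_eq_empty[of "G -` interior (G ` K)" "- K"] by blast
    then have "G q \<in> G ` K" using interior_subset by blast
    then obtain k where "k \<in> K" "G q = G k" by auto
    then have "q = k" using inj by (auto dest: injD)
    then show False using q \<open>k \<in> K\<close> by simp
  qed
  have KU: "K = interior K \<union> frontier K" using clK interior_subset
    by (auto simp: frontier_def)
  have "frontier (G ` K) = G ` K - interior (G ` K)"
    using clGK by (simp add: frontier_def)
  also have "\<dots> = G ` frontier K"
  proof
    show "G ` K - interior (G ` K) \<subseteq> G ` frontier K"
    proof
      fix y assume y: "y \<in> G ` K - interior (G ` K)"
      then obtain k where k: "k \<in> K" "y = G k" by auto
      have "k \<notin> interior K" using sub1 y k by auto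
      then show "y \<in> G ` frontier K" using k KU by auto
    qed
    show "G ` frontier K \<subseteq> G ` K - interior (G ` K)"
      using disj clK by (auto simp: frontier_def)
  qed
  finally show ?thesis .
qed




definition sact :: "(3 \<Rightarrow> 3) \<Rightarrow> (3 \<Rightarrow> bool) \<Rightarrow> real^3 \<Rightarrow> real^3" where
  "sact p s x = (\<chi> i. if s i then - (x $ p i) else x $ p i)"

lemma sact_nth [simp]: "sact p s x $ i = (if s i then - (x $ p i) else x $ p i)"
  by (simp add: sact_def)

lemma sact_inv1: "bij p \<Longrightarrow> sact (inv p) (s \<circ> inv p) (sact p s y) = y"
  by (simp add: vec_eq_iff bij_is_surj surj_f_inv_f)

lemma sact_inv2: "bij p \<Longrightarrow> sact p s (sact (inv p) (s \<circ> inv p) x) = x"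
  by (simp add: vec_eq_iff bij_is_inj)

lemma linear_sact: "linear (sact p s)"
  by (rule linearI) (auto simp: vec_eq_iff)

lemma sact_add: "sact p s (x + y) = sact p s x + sact p s y"
  by (simp add: linear_add[OF linear_sact])

lemma sact_diff: "sact p s (x - y) = sact p s x - sact p s y"
  by (simp add: linear_diff[OF linear_sact])

lemma inner_sact: "bij p \<Longrightarrow> sact p s x \<bullet> sact p s y = x \<bullet> y"
proof -
  assume p: "bij p"
  have "sact p s x \<bullet> sact p s y = (\<Sum>i\<in>UNIV. x $ p i * y $ p i)"
    unfolding inner_vec_def by (rule sum.cong) auto
  also have "\<dots> = (\<Sum>i\<in>UNIV. x $ i * y $ i)"
    using sum.reindex_bij_betw[of p UNIV UNIV "\<lambda>i. x $ i * y $ i"] p by (simp add: bij_betw_def)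
  finally show ?thesis by (simp add: inner_vec_def)
qed

lemma norm_sact: "bij p \<Longrightarrow> norm (sact p s x) = norm x"
  by (simp add: norm_eq_sqrt_inner inner_sact)

lemma orth_sact: "bij p \<Longrightarrow> orthogonal_transformation (sact p s)"
  by (simp add: orthogonal_transformation_def linear_sact inner_sact)

definition Fd :: "(real^3) set" where "Fd = {y. 0 \<le> y$1 \<and> y$1 \<le> y$2 \<and> y$2 \<le> y$3}"

lemma Fd_nonneg: "y \<in> Fd \<Longrightarrow> 0 \<le> y $ i"
  using exhaust_3[of i] by (auto simp: Fd_def)

lemma Fd_bounds: "y \<in> Fd \<Longrightarrow> y $ 1 \<le> y $ i \<and> y $ i \<le> y $ 3"
  using exhaust_3[of i] by (auto simp: Fd_def)

lemma sorted_unique: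
  assumes y: "y \<in> Fd" and y': "y' \<in> Fd" and pi: "bij \<pi>" and eq: "\<And>k. y' $ k = y $ \<pi> k"
  shows "y' = y"
proof -
  have ip: "\<pi> (inv \<pi> k) = k" for k using pi by (simp add: bij_is_surj surj_f_inv_f)
  have e1: "y' $ 1 = y $ 1"
    using eq[of 1] eq[of "inv \<pi> 1"] ip[of 1] Fd_bounds[OF y, of "\<pi> 1"] Fd_bounds[OF y', of "inv \<pi> 1"]
    by auto
  have e3: "y' $ 3 = y $ 3"
    using eq[of 3] eq[of "inv \<pi> 3"] ip[of 3] Fd_bounds[OF y, of "\<pi> 3"] Fd_bounds[OF y', of "inv \<pi> 3"]
    by auto
  have "(\<Sum>k\<in>UNIV. y' $ k) = (\<Sum>k\<in>UNIV. y $ \<pi> k)" using eq by simp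
  also have "\<dots> = (\<Sum>k\<in>UNIV. y $ k)"
    using sum.reindex_bij_betw[of \<pi> UNIV UNIV "\<lambda>k. y $ k"] pi by (simp add: bij_betw_def)
  finally have "y' $ 2 = y $ 2" using e1 e3 by (simp add: sum_3)
  then show ?thesis using e1 e3 by (simp add: vec_eq_iff forall_3)
qed

lemma rep_lemma:
  assumes y: "y \<in> Fd" and y': "y' \<in> Fd" and p: "bij p" and q: "bij q"
    and eq: "sact p s y = sact q t y'"
  shows "y' = y" "\<And>i. y $ p i = y $ q i" "\<And>i. s i \<noteq> t i \<Longrightarrow> y $ p i = 0"
proof -
  have e: "(if s i then - (y $ p i) else y $ p i) = (if t i then - (y' $ q i) else y' $ q i)" for i
    using eq by (simp add: vec_eq_iff)
  have abs: "y $ p i = y' $ q i" for i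
    using e[of i] Fd_nonneg[OF y, of "p i"] Fd_nonneg[OF y', of "q i"]
    by (auto split: if_splits)
  have "y' $ k = y $ p (inv q k)" for k
    using abs[of "inv q k"] q by (simp add: bij_is_surj surj_f_inv_f)
  moreover have "bij (p \<circ> inv q)" using p q by (simp add: bij_comp bij_imp_bij_inv)
  ultimately show yy: "y' = y" using sorted_unique[OF y y', of "p \<circ> inv q"] by simp
  show "y $ p i = y $ q i" for i using abs yy by simp
  show "s i \<noteq> t i \<Longrightarrow> y $ p i = 0" for i using e[of i] abs[of i] by (auto split: if_splits)
qed

definition pattern :: "real^3 \<Rightarrow> real^3 \<Rightarrow> bool" where
  "pattern y z \<longleftrightarrow> (\<forall>a b. y $ a = y $ b \<longrightarrow> z $ a = z $ b) \<and> (\<forall>a. y $ a = 0 \<longrightarrow> z $ a = 0)"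

lemma transfer_sact:
  assumes "\<And>i. y $ p i = y $ q i" "\<And>i. s i \<noteq> t i \<Longrightarrow> y $ p i = 0" "pattern y z"
  shows "sact p s z = sact q t z"
proof -
  have 1: "z $ p i = z $ q i" for i using assms(1,3) unfolding pattern_def by blast
  have 2: "s i \<noteq> t i \<Longrightarrow> z $ p i = 0" for i using assms(2,3) unfolding pattern_def by blast
  show ?thesis unfolding vec_eq_iff using 1 2 by (auto simp del: sact_nth simp: sact_def)
qed

definition perm3 :: "3 \<Rightarrow> 3 \<Rightarrow> 3 \<Rightarrow> 3 \<Rightarrow> 3" where
  "perm3 a b c = (\<lambda>i. if i = 1 then a else if i = 2 then b else c)"

lemma bij_perm3: "a \<noteq> b \<Longrightarrow> a \<noteq> c \<Longrightarrow> b \<noteq> c \<Longrightarrow> bij (perm3 a b c)"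
proof -
  assume d: "a \<noteq> b" "a \<noteq> c" "b \<noteq> c"
  have "inj (perm3 a b c)"
  proof (rule injI)
    fix i j assume "perm3 a b c i = perm3 a b c j"
    then show "i = j" using d exhaust_3[of i] exhaust_3[of j]
      by (auto simp: perm3_def)
  qed
  then show ?thesis using finite_UNIV_inj_surj[of "perm3 a b c"] by (simp add: bij_def)
qed

lemma sort_exists:
  fixes x :: "real^3"
  shows "\<exists>q::3\<Rightarrow>3. bij q \<and> \<bar>x $ q 1\<bar> \<le> \<bar>x $ q 2\<bar> \<and> \<bar>x $ q 2\<bar> \<le> \<bar>x $ q 3\<bar>"
proof -
  have b: "bij (perm3 a b c)" if "a \<noteq> b" "a \<noteq> c" "b \<noteq> c" for a b c using bij_perm3 that by blast
  consider "\<bar>x$1\<bar> \<le> \<bar>x$2\<bar>" "\<bar>x$2\<bar> \<le> \<bar>x$3\<bar>" | "\<bar>x$1\<bar> \<le> \<bar>x$3\<bar>" "\<bar>x$3\<bar> \<le> \<bar>x$2\<bar>"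
    | "\<bar>x$2\<bar> \<le> \<bar>x$1\<bar>" "\<bar>x$1\<bar> \<le> \<bar>x$3\<bar>" | "\<bar>x$2\<bar> \<le> \<bar>x$3\<bar>" "\<bar>x$3\<bar> \<le> \<bar>x$1\<bar>"
    | "\<bar>x$3\<bar> \<le> \<bar>x$1\<bar>" "\<bar>x$1\<bar> \<le> \<bar>x$2\<bar>" | "\<bar>x$3\<bar> \<le> \<bar>x$2\<bar>" "\<bar>x$2\<bar> \<le> \<bar>x$1\<bar>"
    by linarith
  then show ?thesis
  proof cases
    case 1 then show ?thesis by (intro exI[of _ "perm3 1 2 3"] conjI b) (simp_all add: perm3_def)
  next
    case 2 then show ?thesis by (intro exI[of _ "perm3 1 3 2"] conjI b) (simp_all add: perm3_def)
  next
    case 3 then show ?thesis by (intro exI[of _ "perm3 2 1 3"] conjI b) (simp_all add: perm3_def)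
  next
    case 4 then show ?thesis by (intro exI[of _ "perm3 2 3 1"] conjI b) (simp_all add: perm3_def)
  next
    case 5 then show ?thesis by (intro exI[of _ "perm3 3 1 2"] conjI b) (simp_all add: perm3_def)
  next
    case 6 then show ?thesis by (intro exI[of _ "perm3 3 2 1"] conjI b) (simp_all add: perm3_def)
  qed
qed

lemma rep_exists: "\<exists>p s y. bij p \<and> y \<in> Fd \<and> x = sact p s y"
proof -
  obtain q :: "3\<Rightarrow>3" where q: "bij q" "\<bar>x $ q 1\<bar> \<le> \<bar>x $ q 2\<bar>" "\<bar>x $ q 2\<bar> \<le> \<bar>x $ q 3\<bar>"
    using sort_exists by blast
  define y where "y = (\<chi> k. \<bar>x $ q k\<bar>)"
  have "y \<in> Fd" using q by (simp add: Fd_def y_def)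
  moreover have "bij (inv q)" using q by (simp add: bij_imp_bij_inv)
  moreover have "x = sact (inv q) (\<lambda>i. x $ i < 0) y"
    using q by (simp add: vec_eq_iff y_def bij_is_surj surj_f_inv_f)
  ultimately show ?thesis by blast
qed


lemma pattern_adj:
  assumes y: "y \<in> Fd" and z: "z \<in> Fd"
    and e1: "y $ 1 = 0 \<longleftrightarrow> z $ 1 = 0" and e2: "y $ 1 = y $ 2 \<longleftrightarrow> z $ 1 = z $ 2"
    and e3: "y $ 2 = y $ 3 \<longleftrightarrow> z $ 2 = z $ 3"
  shows "pattern y z" "pattern z y"
proof -
  have y13: "y $ 1 = y $ 3 \<longleftrightarrow> y $ 1 = y $ 2 \<and> y $ 2 = y $ 3" using y unfolding Fd_def by auto
  have z13: "z $ 1 = z $ 3 \<longleftrightarrow> z $ 1 = z $ 2 \<and> z $ 2 = z $ 3" using z unfolding Fd_def by auto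
  have y2: "y $ 2 = 0 \<longleftrightarrow> y $ 1 = 0 \<and> y $ 1 = y $ 2" using y unfolding Fd_def by auto
  have z2: "z $ 2 = 0 \<longleftrightarrow> z $ 1 = 0 \<and> z $ 1 = z $ 2" using z unfolding Fd_def by auto
  have y3: "y $ 3 = 0 \<longleftrightarrow> y $ 1 = 0 \<and> y $ 1 = y $ 2 \<and> y $ 2 = y $ 3" using y unfolding Fd_def by auto
  have z3: "z $ 3 = 0 \<longleftrightarrow> z $ 1 = 0 \<and> z $ 1 = z $ 2 \<and> z $ 2 = z $ 3" using z unfolding Fd_def by auto
  have A13: "y $ 1 = y $ 3 \<longleftrightarrow> z $ 1 = z $ 3" using y13 z13 e2 e3 by blast
  have e2': "y $ 2 = y $ 1 \<longleftrightarrow> z $ 2 = z $ 1" using e2 by (simp add: eq_commute)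
  have e3': "y $ 3 = y $ 2 \<longleftrightarrow> z $ 3 = z $ 2" using e3 by (simp add: eq_commute)
  have A13': "y $ 3 = y $ 1 \<longleftrightarrow> z $ 3 = z $ 1" using A13 by (simp add: eq_commute)
  have A: "y $ a = y $ b \<longleftrightarrow> z $ a = z $ b" for a b
    using exhaust_3[of a] exhaust_3[of b]
    by (elim disjE) (simp_all only: e2 e3 A13 e2' e3' A13' simp_thms)
  have B: "y $ a = 0 \<longleftrightarrow> z $ a = 0" for a
    using exhaust_3[of a] by (elim disjE) (simp_all only: e1 e2 e3 y2 z2 y3 z3 simp_thms)
  show "pattern y z" "pattern z y" unfolding pattern_def using A B by auto
qed

definition L1 :: "real^3 \<Rightarrow> real^3" where "L1 y = vector [y$1, y$2, 14/11 * y$3]"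
definition L2 :: "real^3 \<Rightarrow> real^3" where
  "L2 y = vector [y$1, 15/17*y$2 + 5/187*y$3, -8/17*y$2 + 258/187*y$3]"
definition L3 :: "real^3 \<Rightarrow> real^3" where
  "L3 y = vector [7/9*y$1 + 28/153*y$2 + 5/561*y$3, 4/9*y$1 + 79/153*y$2 + 5/561*y$3,
                  4/9*y$1 - 128/153*y$2 + 764/561*y$3]"
definition G0 :: "real^3 \<Rightarrow> real^3" where
  "G0 y = (if 22*y$2 \<le> 5*y$3 then L1 y else if 374*y$1 \<le> 308*y$2 + 15*y$3 then L2 y else L3 y)"

definition M1 :: "real^3 \<Rightarrow> real^3" where "M1 z = vector [z$1, z$2, 11/14*z$3]"
definition M2 :: "real^3 \<Rightarrow> real^3" where
  "M2 z = vector [z$1, 129/115*z$2 - 1/46*z$3, 44/115*z$2 + 33/46*z$3]"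
definition M3 :: "real^3 \<Rightarrow> real^3" where
  "M3 z = vector [13/8*z$1 - 27/46*z$2 - 5/736*z$3, -11/8*z$1 + 111/46*z$2 - 5/736*z$3,
                  -11/8*z$1 + 77/46*z$2 + 539/736*z$3]"
definition H0 :: "real^3 \<Rightarrow> real^3" where
  "H0 z = (if 28*z$2 \<le> 5*z$3 then M1 z else if 460*z$1 \<le> 432*z$2 + 5*z$3 then M2 z else M3 z)"

lemmas Ldefs = L1_def L2_def L3_def M1_def M2_def M3_def

lemma G0_Fd: "y \<in> Fd \<Longrightarrow> G0 y \<in> Fd"
  unfolding G0_def Fd_def Ldefs by (auto simp: vector_3)

lemma G0_adj:
  assumes "y \<in> Fd"
  shows "y $ 1 = 0 \<longleftrightarrow> G0 y $ 1 = 0" "y $ 1 = y $ 2 \<longleftrightarrow> G0 y $ 1 = G0 y $ 2"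
    "y $ 2 = y $ 3 \<longleftrightarrow> G0 y $ 2 = G0 y $ 3"
  using assms unfolding G0_def Fd_def Ldefs by (auto simp: vector_3)

lemma G0_pattern: "y \<in> Fd \<Longrightarrow> pattern y (G0 y)" "y \<in> Fd \<Longrightarrow> pattern (G0 y) y"
  using pattern_adj[OF _ G0_Fd G0_adj(1) G0_adj(2) G0_adj(3)] by auto

lemma ML1: "M1 (L1 y) = y" unfolding Ldefs by (simp add: vec_eq_iff forall_3)
lemma ML2: "M2 (L2 y) = y" unfolding Ldefs by (simp add: vec_eq_iff forall_3 field_simps)
lemma ML3: "M3 (L3 y) = y" unfolding Ldefs by (simp add: vec_eq_iff forall_3 field_simps)

lemma H0_G0: "y \<in> Fd \<Longrightarrow> H0 (G0 y) = y"
proof -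
  assume y: "y \<in> Fd"
  consider "22*y$2 \<le> 5*y$3" | "\<not> 22*y$2 \<le> 5*y$3" "374*y$1 \<le> 308*y$2 + 15*y$3"
    | "\<not> 22*y$2 \<le> 5*y$3" "\<not> 374*y$1 \<le> 308*y$2 + 15*y$3" by blast
  then show ?thesis
  proof cases
    case 1
    then have "28 * L1 y $ 2 \<le> 5 * L1 y $ 3" by (simp add: L1_def)
    then show ?thesis using 1 by (simp add: G0_def H0_def ML1)
  next
    case 2
    then have "\<not> 28 * L2 y $ 2 \<le> 5 * L2 y $ 3" "460 * L2 y $ 1 \<le> 432 * L2 y $ 2 + 5 * L2 y $ 3"
      by (simp_all add: L2_def)
    then show ?thesis using 2 by (simp add: G0_def H0_def ML2)
  next
    case 3
    then have "\<not> 28 * L3 y $ 2 \<le> 5 * L3 y $ 3" "\<not> 460 * L3 y $ 1 \<le> 432 * L3 y $ 2 + 5 * L3 y $ 3"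
      using y by (simp_all add: L3_def Fd_def)
    then show ?thesis using 3 by (simp add: G0_def H0_def ML3)
  qed
qed

lemma G0_inj: "y \<in> Fd \<Longrightarrow> y' \<in> Fd \<Longrightarrow> G0 y = G0 y' \<Longrightarrow> y = y'"
  using H0_G0 by metis


lemma linear_L1: "linear L1" by (rule linearI) (simp_all add: L1_def vec_eq_iff forall_3 algebra_simps)
lemma linear_L2: "linear L2" by (rule linearI) (simp_all add: L2_def vec_eq_iff forall_3 field_simps)
lemma linear_L3: "linear L3" by (rule linearI) (simp_all add: L3_def vec_eq_iff forall_3 field_simps)

lemma cont_linear: "linear f \<Longrightarrow> continuous_on S (f :: real^3 \<Rightarrow> real^3)"
  by (simp add: linear_continuous_on linear_conv_bounded_linear)

lemma closed_Fd: "closed Fd"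
  unfolding Fd_def by (intro closed_Collect_conj closed_Collect_le continuous_intros)

definition S1 :: "(real^3) set" where "S1 = Fd \<inter> {y. 22*y$2 \<le> 5*y$3}"
definition S2 :: "(real^3) set" where "S2 = Fd \<inter> {y. 5*y$3 \<le> 22*y$2 \<and> 374*y$1 \<le> 308*y$2 + 15*y$3}"
definition S3 :: "(real^3) set" where "S3 = Fd \<inter> {y. 5*y$3 \<le> 22*y$2 \<and> 308*y$2 + 15*y$3 \<le> 374*y$1}"

lemma G0_S1: "y \<in> S1 \<Longrightarrow> G0 y = L1 y" by (simp add: S1_def G0_def)
lemma G0_S2: "y \<in> S2 \<Longrightarrow> G0 y = L2 y"
proof -
  assume y: "y \<in> S2"
  show ?thesis
  proof (cases "22*y$2 \<le> 5*y$3")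
    case True
    then have "5*y$3 = 22*y$2" using y by (simp add: S2_def)
    then have "y$3 = 22/5*y$2" by simp
    then have "L1 y = L2 y" unfolding L1_def L2_def by (simp add: vec_eq_iff forall_3)
    then show ?thesis using True by (simp add: G0_def)
  next
    case False then show ?thesis using y by (simp add: G0_def S2_def)
  qed
qed
lemma G0_S3: "y \<in> S3 \<Longrightarrow> G0 y = L3 y"
proof -
  assume y: "y \<in> S3"
  show ?thesis
  proof (cases "22*y$2 \<le> 5*y$3")
    case True
    then have "y$1 = y$2" "y$3 = 22/5*y$2" using y by (auto simp: S3_def Fd_def)
    then have "L1 y = L3 y" unfolding L1_def L3_def by (simp add: vec_eq_iff forall_3)
    then show ?thesis using True by (simp add: G0_def)
  next
    case False
    show ?thesis
    proof (cases "374*y$1 \<le> 308*y$2 + 15*y$3")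
      case True
      then have "y$1 = 14/17*y$2 + 15/374*y$3" using y by (auto simp: S3_def)
      then have "L2 y = L3 y" unfolding L2_def L3_def by (simp add: vec_eq_iff forall_3 field_simps)
      then show ?thesis using True False by (simp add: G0_def)
    next
      case False2: False
      then show ?thesis using False by (simp add: G0_def)
    qed
  qed
qed

lemma Fd_S: "Fd = S1 \<union> S2 \<union> S3" by (auto simp: S1_def S2_def S3_def)

lemma closed_S: "closed S1" "closed S2" "closed S3"
  unfolding S1_def S2_def S3_def
  by (intro closed_Int closed_Fd closed_Collect_conj closed_Collect_le continuous_intros)+

lemma G0_cont: "continuous_on Fd G0"
proof -
  have "continuous_on S1 G0" using cont_linear[OF linear_L1] by (rule continuous_on_eq) (simp add: G0_S1)
  moreover have "continuous_on S2 G0" using cont_linear[OF linear_L2] by (rule continuous_on_eq) (simp add: G0_S2)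
  moreover have "continuous_on S3 G0" using cont_linear[OF linear_L3] by (rule continuous_on_eq) (simp add: G0_S3)
  ultimately show ?thesis unfolding Fd_S using closed_S
    by (intro continuous_on_closed_Un closed_Un) auto
qed

definition Gmap :: "real^3 \<Rightarrow> real^3" where
  "Gmap x = (SOME z. \<exists>p s y. bij p \<and> y \<in> Fd \<and> x = sact p s y \<and> z = sact p s (G0 y))"

lemma Gmap_sact:
  assumes p: "bij p" and y: "y \<in> Fd"
  shows "Gmap (sact p s y) = sact p s (G0 y)"
proof -
  have "\<exists>z. \<exists>p' s' y'. bij p' \<and> y' \<in> Fd \<and> sact p s y = sact p' s' y' \<and> z = sact p' s' (G0 y')"
    using p y by blast
  then have "\<exists>p' s' y'. bij p' \<and> y' \<in> Fd \<and> sact p s y = sact p' s' y' \<and> Gmap (sact p s y) = sact p' s' (G0 y')"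
    unfolding Gmap_def by (rule someI_ex)
  then obtain p' s' y' where *: "bij p'" "y' \<in> Fd" "sact p s y = sact p' s' y'"
    "Gmap (sact p s y) = sact p' s' (G0 y')" by blast
  note r = rep_lemma[OF y *(2) p *(1) *(3)]
  have "sact p s (G0 y) = sact p' s' (G0 y)"
    by (rule transfer_sact[of y p p' s s']) (use r G0_pattern(1)[OF y] in auto)
  then show ?thesis using *(4) r(1) by simp
qed

lemma sact_id: "sact id (\<lambda>_. False) y = y" by (simp add: vec_eq_iff)

lemma Gmap_Fd: "y \<in> Fd \<Longrightarrow> Gmap y = G0 y"
  using Gmap_sact[of id y "\<lambda>_. False"] by (simp add: sact_id)

lemma Gmap_inj: "inj Gmap"
proof (rule injI)
  fix x x' assume eq: "Gmap x = Gmap x'"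
  obtain p s y where 1: "bij p" "y \<in> Fd" "x = sact p s y" using rep_exists by blast
  obtain q t y' where 2: "bij q" "y' \<in> Fd" "x' = sact q t y'" using rep_exists by blast
  have "sact p s (G0 y) = sact q t (G0 y')" using eq 1 2 Gmap_sact by simp
  note r = rep_lemma[OF G0_Fd[OF 1(2)] G0_Fd[OF 2(2)] 1(1) 2(1) this]
  have yy: "y' = y" using G0_inj[OF 2(2) 1(2) r(1)] .
  have "sact p s y = sact q t y"
    by (rule transfer_sact[of "G0 y" p q s t y]) (use r G0_pattern(2)[OF 1(2)] in auto)
  then show "x = x'" using 1 2 yy by simp
qed

lemma cont_sact: "continuous_on S (sact p s)"
  by (rule cont_linear[OF linear_sact])

lemma sact_image_Fd: "bij p \<Longrightarrow> sact p s ` Fd = sact (inv p) (s \<circ> inv p) -` Fd"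
  using sact_inv1[of p s] sact_inv2[of p s] by (auto simp: image_iff) metis

lemma closed_sact_Fd: "bij p \<Longrightarrow> closed (sact p s ` Fd)"
  by (simp add: sact_image_Fd closed_Fd continuous_closed_vimage linear_continuous_at
      linear_conv_bounded_linear[symmetric] linear_sact)

definition Grp :: "((3 \<Rightarrow> 3) \<times> (3 \<Rightarrow> bool)) set" where "Grp = {ps. bij (fst ps)}"

lemma finite_Grp: "finite Grp" by (rule finite_subset[OF subset_UNIV]) simp

lemma UNIV_sectors: "UNIV = (\<Union>ps\<in>Grp. sact (fst ps) (snd ps) ` Fd)"
  using rep_exists by (fastforce simp: Grp_def)

lemma Gmap_cont: "continuous_on UNIV Gmap"
proof -
  have "continuous_on (\<Union>ps\<in>Grp. sact (fst ps) (snd ps) ` Fd) Gmap"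
  proof (rule continuous_on_closed_Union[OF finite_Grp])
    fix ps assume "ps \<in> Grp"
    then obtain p s where ps: "ps = (p, s)" "bij p" by (cases ps) (auto simp: Grp_def)
    show "closed (sact (fst ps) (snd ps) ` Fd)" using ps closed_sact_Fd by simp
    have "continuous_on (sact p s ` Fd) (sact p s \<circ> G0 \<circ> sact (inv p) (s \<circ> inv p))"
    proof (intro continuous_on_compose cont_sact)
      have "sact (inv p) (s \<circ> inv p) ` sact p s ` Fd = Fd" using sact_inv1[OF ps(2)] by (force simp: image_iff)
      then show "continuous_on (sact (inv p) (s \<circ> inv p) ` sact p s ` Fd) G0" using G0_cont by simp
    qed
    then have "continuous_on (sact p s ` Fd) Gmap"
      by (rule continuous_on_eq) (use ps sact_inv1 Gmap_sact in auto)
    then show "continuous_on (sact (fst ps) (snd ps) ` Fd) Gmap" using ps by simp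
  qed
  then show ?thesis using UNIV_sectors by simp
qed


section \<open>Simplices\<close>

lemma Basis3: "(Basis :: (real^3) set) = {axis 1 1, axis 2 1, axis 3 1}"
  by (auto simp: Basis_vec_def) (metis exhaust_3)

definition Std :: "(real^3) set" where "Std = convex hull (insert 0 Basis)"

lemma Std_iff: "l \<in> Std \<longleftrightarrow> 0 \<le> l$1 \<and> 0 \<le> l$2 \<and> 0 \<le> l$3 \<and> l$1 + l$2 + l$3 \<le> 1"
  unfolding Std_def std_simplex by (simp add: Basis3 inner_axis axis_eq_axis add.assoc)

lemma compact_Std: "compact Std"
  unfolding Std_def by (intro finite_imp_compact_convex_hull) auto

lemma measure_Std: "measure lebesgue Std = 1/6"
proof -
  have "measure lebesgue Std = measure lborel Std"
    using compact_Std by (intro measure_completion) (auto dest: compact_imp_closed)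
  also have "\<dots> = 1/6" unfolding Std_def by (simp add: content_std_simplex fact_numeral)
  finally show ?thesis .
qed

lemma polytope_Std: "polytope Std"
  unfolding Std_def polytope_def by (intro exI[of _ "insert 0 Basis"]) auto

lemma aff_dim_Std: "aff_dim Std = 3"
proof -
  obtain a where "a \<in> interior Std" unfolding Std_def using interior_std_simplex_nonempty by blast
  then have "interior Std \<noteq> {}" by auto
  then show ?thesis by (simp add: aff_dim_nonempty_interior)
qed

definition cols3 :: "real^3 \<Rightarrow> real^3 \<Rightarrow> real^3 \<Rightarrow> real^3^3" where
  "cols3 u v w = (\<chi> i k. if k = 1 then u$i else if k = 2 then v$i else w$i)"

lemma cols3_mult: "cols3 u v w *v l = l$1 *\<^sub>R u + l$2 *\<^sub>R v + l$3 *\<^sub>R w"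
  by (simp add: vec_eq_iff cols3_def matrix_vector_mult_def sum_3 algebra_simps)

lemma det_cols3: "det (cols3 u v w) =
  u$1 * v$2 * w$3 + v$1 * w$2 * u$3 + w$1 * u$2 * v$3 - u$1 * w$2 * v$3 - v$1 * u$2 * w$3 - w$1 * v$2 * u$3"
  by (simp add: det_3 cols3_def)

definition "vc = (vector [0, 0, 1/2] :: real^3)"
definition "va = (vector [0, 5/44, 1/2] :: real^3)"
definition "vd = (vector [5/44, 5/44, 1/2] :: real^3)"
definition "vm = (vector [0, 1/2, 1/2] :: real^3)"
definition "vb = (vector [19/44, 1/2, 1/2] :: real^3)"
definition "vv = (vector [1/2, 1/2, 1/2] :: real^3)"
definition "wc = (vector [0, 0, 7/11] :: real^3)"
definition "wa = (vector [0, 5/44, 7/11] :: real^3)"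
definition "wd = (vector [5/44, 5/44, 7/11] :: real^3)"
definition "wm = (vector [0, 5/11, 5/11] :: real^3)"
definition "wb = (vector [19/44, 5/11, 5/11] :: real^3)"
definition "wv = (vector [16/33, 16/33, 16/33] :: real^3)"

lemmas vdefs = vc_def va_def vd_def vm_def vb_def vv_def wc_def wa_def wd_def wm_def wb_def wv_def

definition Mm :: "nat \<Rightarrow> real^3^3" where
  "Mm j = (if j = 1 then cols3 vc vd va else if j = 2 then cols3 va vb vm
           else if j = 3 then cols3 va vd vb else cols3 vd vv vb)"
definition Nm :: "nat \<Rightarrow> real^3^3" where
  "Nm j = (if j = 1 then cols3 wc wd wa else if j = 2 then cols3 wa wb wm
           else if j = 3 then cols3 wa wd wb else cols3 wd wv wb)"

definition J4 :: "nat set" where "J4 = {1, 2, 3, 4}"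

lemma Mm_comp: "(Mm j *v l) $ 3 = (l$1 + l$2 + l$3) / 2"
  by (simp add: Mm_def cols3_mult vdefs)

lemma piece1: "l \<in> Std \<Longrightarrow> Mm 1 *v l \<in> S1 \<and> G0 (Mm 1 *v l) = Nm 1 *v l"
  unfolding Std_iff
  by (simp add: G0_S1 Mm_def Nm_def cols3_mult vdefs S1_def Fd_def L1_def vec_eq_iff forall_3 field_simps)

lemma piece2: "l \<in> Std \<Longrightarrow> Mm 2 *v l \<in> S2 \<and> G0 (Mm 2 *v l) = Nm 2 *v l"
proof -
  assume l: "l \<in> Std"
  have "Mm 2 *v l \<in> S2" using l unfolding Std_iff
    by (simp add: Mm_def cols3_mult vdefs S2_def Fd_def field_simps)
  moreover have "L2 (Mm 2 *v l) = Nm 2 *v l"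
    by (simp add: Mm_def Nm_def cols3_mult vdefs L2_def vec_eq_iff forall_3 field_simps)
  ultimately show ?thesis by (simp add: G0_S2)
qed

lemma piece3: "l \<in> Std \<Longrightarrow> Mm 3 *v l \<in> S2 \<and> G0 (Mm 3 *v l) = Nm 3 *v l"
proof -
  assume l: "l \<in> Std"
  have "Mm 3 *v l \<in> S2" using l unfolding Std_iff
    by (simp add: Mm_def cols3_mult vdefs S2_def Fd_def field_simps)
  moreover have "L2 (Mm 3 *v l) = Nm 3 *v l"
    by (simp add: Mm_def Nm_def cols3_mult vdefs L2_def vec_eq_iff forall_3 field_simps)
  ultimately show ?thesis by (simp add: G0_S2)
qed

lemma piece4: "l \<in> Std \<Longrightarrow> Mm 4 *v l \<in> S3 \<and> G0 (Mm 4 *v l) = Nm 4 *v l"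
proof -
  assume l: "l \<in> Std"
  have "Mm 4 *v l \<in> S3" using l unfolding Std_iff
    by (simp add: Mm_def cols3_mult vdefs S3_def Fd_def field_simps)
  moreover have "L3 (Mm 4 *v l) = Nm 4 *v l"
    by (simp add: Mm_def Nm_def cols3_mult vdefs L3_def vec_eq_iff forall_3 field_simps)
  ultimately show ?thesis by (simp add: G0_S3)
qed

lemma piece: "j \<in> J4 \<Longrightarrow> l \<in> Std \<Longrightarrow> Mm j *v l \<in> Fd \<and> G0 (Mm j *v l) = Nm j *v l"
  using piece1 piece2 piece3 piece4 unfolding J4_def S1_def S2_def S3_def by auto


lemma cover:
  assumes y: "y \<in> Fd" "y$3 \<le> 1/2"
  shows "\<exists>j\<in>J4. \<exists>l\<in>Std. y = Mm j *v l"
proof -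
  consider "22*y$2 \<le> 5*y$3"
    | "\<not> 22*y$2 \<le> 5*y$3" "374*y$1 \<le> 308*y$2 + 15*y$3" "0 \<le> -374*y$1 + 418*y$2 - 95*y$3"
    | "\<not> 22*y$2 \<le> 5*y$3" "374*y$1 \<le> 308*y$2 + 15*y$3" "\<not> 0 \<le> -374*y$1 + 418*y$2 - 95*y$3"
    | "\<not> 22*y$2 \<le> 5*y$3" "\<not> 374*y$1 \<le> 308*y$2 + 15*y$3" by blast
  then show ?thesis
  proof cases
    case 1
    let ?l = "vector [2*y$3 - 44/5*y$2, 44/5*y$1, 44/5*y$2 - 44/5*y$1] :: real^3"
    have "?l \<in> Std" using 1 y unfolding Std_iff Fd_def vector_3 mem_Collect_eq by - (elim conjE, intro conjI; linarith)
    moreover have "y = Mm 1 *v ?l" by (simp add: Mm_def cols3_mult vdefs vec_eq_iff forall_3 field_simps)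
    ultimately show ?thesis unfolding J4_def by blast
  next
    case 2
    let ?l = "vector [44/17*y$3 - 44/17*y$2, 44/19*y$1, -44/19*y$1 + 44/17*y$2 - 10/17*y$3] :: real^3"
    have "?l \<in> Std" using 2 y unfolding Std_iff Fd_def vector_3 mem_Collect_eq by - (elim conjE, intro conjI; linarith)
    moreover have "y = Mm 2 *v ?l" by (simp add: Mm_def cols3_mult vdefs vec_eq_iff forall_3 field_simps)
    ultimately show ?thesis unfolding J4_def by blast
  next
    case 3
    let ?l = "vector [-44/5*y$1 + 616/85*y$2 + 6/17*y$3, 44/5*y$1 - 836/85*y$2 + 38/17*y$3, 44/17*y$2 - 10/17*y$3] :: real^3"
    have "?l \<in> Std" using 3 y unfolding Std_iff Fd_def vector_3 mem_Collect_eq by - (elim conjE, intro conjI; linarith)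
    moreover have "y = Mm 3 *v ?l" by (simp add: Mm_def cols3_mult vdefs vec_eq_iff forall_3 field_simps)
    ultimately show ?thesis unfolding J4_def by blast
  next
    case 4
    let ?l = "vector [44/17*y$3 - 44/17*y$2, 44/3*y$1 - 616/51*y$2 - 10/17*y$3, 44/3*y$2 - 44/3*y$1] :: real^3"
    have "?l \<in> Std" using 4 y unfolding Std_iff Fd_def vector_3 mem_Collect_eq by - (elim conjE, intro conjI; linarith)
    moreover have "y = Mm 4 *v ?l" by (simp add: Mm_def cols3_mult vdefs vec_eq_iff forall_3 field_simps)
    ultimately show ?thesis unfolding J4_def by blast
  qed
qed

lemma norm_sq_eq: "norm (x::real^3) = norm (y::real^3) \<longleftrightarrow> x$1^2 + x$2^2 + x$3^2 = y$1^2 + y$2^2 + y$3^2"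
proof -
  have "norm x = sqrt (x$1^2 + x$2^2 + x$3^2)" "norm y = sqrt (y$1^2 + y$2^2 + y$3^2)"
    by (simp_all add: norm_eq_sqrt_inner inner_vec_def sum_3 power2_eq_square)
  then show ?thesis by simp
qed

lemma piece_iso:
  assumes j: "j \<in> J4" and w3: "w$1 + w$2 + w$3 = 0"
  shows "norm (Nm j *v w) = norm (Mm j *v w)"
proof -
  have w: "w$3 = - w$1 - w$2" using w3 by simp
  show ?thesis using j unfolding norm_sq_eq J4_def
    by (auto simp: Mm_def Nm_def cols3_mult vdefs w power2_eq_square field_simps)
qed

lemma det_Mm: "det (Mm 1) = 25/3872" "det (Mm 2) = 323/3872" "det (Mm 3) = 85/3872" "det (Mm 4) = 51/3872"
  by (simp_all add: Mm_def det_cols3 vdefs)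

lemma det_Nm: "det (Nm 1) = 175/21296" "det (Nm 2) = 2185/21296" "det (Nm 3) = 575/21296" "det (Nm 4) = 23/3993"
  by (simp_all add: Nm_def det_cols3 vdefs)

lemma det_Nm_nz: "j \<in> J4 \<Longrightarrow> det (Nm j) \<noteq> 0"
  using det_Nm unfolding J4_def by auto

lemma det_Mm_nz: "j \<in> J4 \<Longrightarrow> det (Mm j) \<noteq> 0"
  using det_Mm unfolding J4_def by auto


section \<open>Cube\<close>

definition "hc = (vec (1/2) :: real^3)"
definition "C0 = cbox (- hc) hc"

lemma le_not_all_less: "((\<forall>i. a i \<le> (h::real)) \<and> \<not> (\<forall>i. a i < h)) \<longleftrightarrow> ((\<forall>i. a i \<le> h) \<and> (\<exists>i. a i = h))"
  by (auto simp: not_less intro: antisym)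

lemma C0_iff: "x \<in> C0 \<longleftrightarrow> (\<forall>i. \<bar>x$i\<bar> \<le> 1/2)"
proof -
  have e: "((- hc) $ i \<le> x $ i \<and> x $ i \<le> hc $ i) \<longleftrightarrow> \<bar>x$i\<bar> \<le> 1/2" for i
    by (auto simp: hc_def)
  show ?thesis by (simp only: C0_def mem_box_cart e)
qed

lemma frontier_C0: "frontier C0 = {x. (\<forall>i. \<bar>x$i\<bar> \<le> 1/2) \<and> (\<exists>i. \<bar>x$i\<bar> = 1/2)}"
proof -
  have e: "((- hc) $ i < x $ i \<and> x $ i < hc $ i) \<longleftrightarrow> \<bar>x$i\<bar> < 1/2" for x :: "real^3" and i
    by (auto simp: hc_def)
  have e1: "((- hc) $ i \<le> x $ i \<and> x $ i \<le> hc $ i) \<longleftrightarrow> \<bar>x$i\<bar> \<le> 1/2" for x :: "real^3" and i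
    by (auto simp: hc_def)
  have "x \<in> frontier C0 \<longleftrightarrow> (\<forall>i. \<bar>x$i\<bar> \<le> 1/2) \<and> \<not> (\<forall>i. \<bar>x$i\<bar> < 1/2)" for x
    unfolding C0_def frontier_cbox Diff_iff mem_box_cart e e1 ..
  moreover have "(\<forall>i. \<bar>x$i\<bar> \<le> 1/2) \<and> \<not> (\<forall>i. \<bar>x$i\<bar> < 1/2) \<longleftrightarrow>
      (\<forall>i. \<bar>x$i\<bar> \<le> 1/2) \<and> (\<exists>i. \<bar>x$i\<bar> = 1/2)" for x :: "real^3"
    using le_not_all_less[of "\<lambda>i. \<bar>x$i\<bar>" "1/2"] by simp
  ultimately show ?thesis by blast
qed

lemma sact_C0: "bij p \<Longrightarrow> sact p s y \<in> C0 \<longleftrightarrow> y \<in> C0"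
proof -
  assume p: "bij p"
  have "(\<forall>i. \<bar>y $ p i\<bar> \<le> 1/2) \<longleftrightarrow> (\<forall>k. \<bar>y $ k\<bar> \<le> 1/2)"
    using p by (metis bij_is_surj surj_f_inv_f)
  then show ?thesis by (simp add: C0_iff)
qed

lemma sact_frontier: "bij p \<Longrightarrow> sact p s y \<in> frontier C0 \<longleftrightarrow> y \<in> frontier C0"
proof -
  assume p: "bij p"
  have "(\<forall>i. \<bar>y $ p i\<bar> \<le> 1/2) \<longleftrightarrow> (\<forall>k. \<bar>y $ k\<bar> \<le> 1/2)"
    using p by (metis bij_is_surj surj_f_inv_f)
  moreover have "(\<exists>i. \<bar>y $ p i\<bar> = 1/2) \<longleftrightarrow> (\<exists>k. \<bar>y $ k\<bar> = 1/2)"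
    using p by (metis bij_is_surj surj_f_inv_f)
  ultimately show ?thesis by (simp add: frontier_C0)
qed

lemma Fd_C0: "y \<in> Fd \<Longrightarrow> y \<in> C0 \<longleftrightarrow> y$3 \<le> 1/2"
  using Fd_nonneg[of y] Fd_bounds[of y] unfolding C0_iff by (metis abs_of_nonneg order_trans)

lemma Fd_frontier: "y \<in> Fd \<Longrightarrow> y \<in> frontier C0 \<longleftrightarrow> y$3 = 1/2"
proof -
  assume y: "y \<in> Fd"
  have nn: "\<And>i. \<bar>y$i\<bar> = y$i" using Fd_nonneg[OF y] by simp
  have b: "\<And>i. y$i \<le> y$3" using Fd_bounds[OF y] by blast
  show ?thesis
  proof
    assume "y \<in> frontier C0"
    then have "\<forall>i. y$i \<le> 1/2" "\<exists>i. y$i = 1/2" unfolding frontier_C0 using nn by auto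
    then show "y$3 = 1/2" using b by (metis order_antisym)
  next
    assume y3: "y$3 = 1/2"
    have "\<bar>y$i\<bar> \<le> 1/2" for i using nn[of i] b[of i] y3 by simp
    moreover have "\<bar>y$3\<bar> = 1/2" using nn y3 by simp
    ultimately show "y \<in> frontier C0" unfolding frontier_C0 by blast
  qed
qed

definition Idx :: "(((3 \<Rightarrow> 3) \<times> (3 \<Rightarrow> bool)) \<times> nat) set" where "Idx = Grp \<times> J4"

lemma finite_Idx: "finite Idx" unfolding Idx_def J4_def using finite_Grp by simp

definition Qp :: "(3 \<Rightarrow> 3) \<times> (3 \<Rightarrow> bool) \<Rightarrow> nat \<Rightarrow> (real^3) set" where
  "Qp ps j = (\<lambda>l. sact (fst ps) (snd ps) (Nm j *v l)) ` Std"
definition Dp :: "(3 \<Rightarrow> 3) \<times> (3 \<Rightarrow> bool) \<Rightarrow> nat \<Rightarrow> (real^3) set" where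
  "Dp ps j = (\<lambda>l. sact (fst ps) (snd ps) (Mm j *v l)) ` Std"
definition Ep :: "(3 \<Rightarrow> 3) \<times> (3 \<Rightarrow> bool) \<Rightarrow> nat \<Rightarrow> (real^3) set" where
  "Ep ps j = (\<lambda>l. sact (fst ps) (snd ps) (Mm j *v l)) ` (Std \<inter> {l. l$1 + l$2 + l$3 = 1})"

lemma Gmap_C0: "Gmap ` C0 = (\<Union>i\<in>Idx. Qp (fst i) (snd i))"
proof
  show "Gmap ` C0 \<subseteq> (\<Union>i\<in>Idx. Qp (fst i) (snd i))"
  proof
    fix z assume "z \<in> Gmap ` C0"
    then obtain x where x: "x \<in> C0" "z = Gmap x" by auto
    obtain p s y where r: "bij p" "y \<in> Fd" "x = sact p s y" using rep_exists by blast
    have "y$3 \<le> 1/2" using x r sact_C0 Fd_C0 by auto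
    then obtain j l where jl: "j \<in> J4" "l \<in> Std" "y = Mm j *v l" using cover[OF r(2)] by blast
    have "z = sact p s (Nm j *v l)" using x r jl Gmap_sact piece by simp
    then have "z \<in> Qp (p, s) j" using jl by (auto simp: Qp_def)
    moreover have "((p, s), j) \<in> Idx" using r jl by (simp add: Idx_def Grp_def)
    ultimately show "z \<in> (\<Union>i\<in>Idx. Qp (fst i) (snd i))" by force
  qed
  show "(\<Union>i\<in>Idx. Qp (fst i) (snd i)) \<subseteq> Gmap ` C0"
  proof
    fix z assume "z \<in> (\<Union>i\<in>Idx. Qp (fst i) (snd i))"
    then obtain p s j l where *: "bij p" "j \<in> J4" "l \<in> Std" "z = sact p s (Nm j *v l)"
      by (auto simp: Idx_def Grp_def Qp_def)
    have y: "Mm j *v l \<in> Fd" "G0 (Mm j *v l) = Nm j *v l" using piece[OF *(2,3)] by auto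
    have "(Mm j *v l) $ 3 \<le> 1/2" using *(3) by (simp add: Mm_comp Std_iff)
    then have "sact p s (Mm j *v l) \<in> C0" using sact_C0[OF *(1)] Fd_C0[OF y(1)] by simp
    moreover have "z = Gmap (sact p s (Mm j *v l))" using * y Gmap_sact by simp
    ultimately show "z \<in> Gmap ` C0" by blast
  qed
qed

lemma C0_cover: "C0 = (\<Union>i\<in>Idx. Dp (fst i) (snd i))"
proof
  show "C0 \<subseteq> (\<Union>i\<in>Idx. Dp (fst i) (snd i))"
  proof
    fix x assume x: "x \<in> C0"
    obtain p s y where r: "bij p" "y \<in> Fd" "x = sact p s y" using rep_exists by blast
    have "y$3 \<le> 1/2" using x r sact_C0 Fd_C0 by auto
    then obtain j l where jl: "j \<in> J4" "l \<in> Std" "y = Mm j *v l" using cover[OF r(2)] by blast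
    have "x \<in> Dp (p, s) j" using r jl by (auto simp: Dp_def)
    moreover have "((p, s), j) \<in> Idx" using r jl by (simp add: Idx_def Grp_def)
    ultimately show "x \<in> (\<Union>i\<in>Idx. Dp (fst i) (snd i))" by force
  qed
  show "(\<Union>i\<in>Idx. Dp (fst i) (snd i)) \<subseteq> C0"
  proof
    fix z assume "z \<in> (\<Union>i\<in>Idx. Dp (fst i) (snd i))"
    then obtain p s j l where *: "bij p" "j \<in> J4" "l \<in> Std" "z = sact p s (Mm j *v l)"
      by (auto simp: Idx_def Grp_def Dp_def)
    have y: "Mm j *v l \<in> Fd" using piece[OF *(2,3)] by auto
    have "(Mm j *v l) $ 3 \<le> 1/2" using *(3) by (simp add: Mm_comp Std_iff)
    then show "z \<in> C0" using sact_C0[OF *(1)] Fd_C0[OF y(1)] * by simp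
  qed
qed

lemma frontier_cover: "frontier C0 = (\<Union>i\<in>Idx. Ep (fst i) (snd i))"
proof
  show "frontier C0 \<subseteq> (\<Union>i\<in>Idx. Ep (fst i) (snd i))"
  proof
    fix x assume x: "x \<in> frontier C0"
    obtain p s y where r: "bij p" "y \<in> Fd" "x = sact p s y" using rep_exists by blast
    have y3: "y$3 = 1/2" using x r sact_frontier Fd_frontier by auto
    then obtain j l where jl: "j \<in> J4" "l \<in> Std" "y = Mm j *v l" using cover[OF r(2)] by force
    have "l$1 + l$2 + l$3 = 1" using y3 jl Mm_comp by simp
    then have "x \<in> Ep (p, s) j" using r jl by (auto simp: Ep_def)
    moreover have "((p, s), j) \<in> Idx" using r jl by (simp add: Idx_def Grp_def)
    ultimately show "x \<in> (\<Union>i\<in>Idx. Ep (fst i) (snd i))" by force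
  qed
  show "(\<Union>i\<in>Idx. Ep (fst i) (snd i)) \<subseteq> frontier C0"
  proof
    fix z assume "z \<in> (\<Union>i\<in>Idx. Ep (fst i) (snd i))"
    then obtain p s j l where *: "bij p" "j \<in> J4" "l \<in> Std" "l$1 + l$2 + l$3 = 1" "z = sact p s (Mm j *v l)"
      by (auto simp: Idx_def Grp_def Ep_def)
    have y: "Mm j *v l \<in> Fd" using piece[OF *(2,3)] by auto
    have "(Mm j *v l) $ 3 = 1/2" using *(4) by (simp add: Mm_comp)
    then show "z \<in> frontier C0" using sact_frontier[OF *(1)] Fd_frontier[OF y(1)] * by simp
  qed
qed

lemma Ep_iso:
  assumes i: "i \<in> Idx" and x: "x \<in> Ep (fst i) (snd i)" and y: "y \<in> Ep (fst i) (snd i)"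
  shows "dist (Gmap x) (Gmap y) = dist x y"
proof -
  obtain p s j where i': "i = ((p, s), j)" "bij p" "j \<in> J4" using i by (auto simp: Idx_def Grp_def)
  obtain l where l: "l \<in> Std" "l$1 + l$2 + l$3 = 1" "x = sact p s (Mm j *v l)" using x i' by (auto simp: Ep_def)
  obtain m where m: "m \<in> Std" "m$1 + m$2 + m$3 = 1" "y = sact p s (Mm j *v m)" using y i' by (auto simp: Ep_def)
  have gx: "Gmap x = sact p s (Nm j *v l)" using l i' piece Gmap_sact by simp
  have gy: "Gmap y = sact p s (Nm j *v m)" using m i' piece Gmap_sact by simp
  have w: "(l - m)$1 + (l - m)$2 + (l - m)$3 = 0" using l m by simp
  have "dist (Gmap x) (Gmap y) = norm (Nm j *v (l - m))"
    by (simp add: gx gy dist_norm sact_diff[symmetric] norm_sact[OF i'(2)] matrix_vector_mult_diff_distrib)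
  also have "\<dots> = norm (Mm j *v (l - m))" by (rule piece_iso[OF i'(3) w])
  also have "\<dots> = dist x y"
    by (simp add: l m dist_norm sact_diff[symmetric] norm_sact[OF i'(2)] matrix_vector_mult_diff_distrib)
  finally show ?thesis .
qed


section \<open>Measure\<close>

lemma sact_inj: "bij p \<Longrightarrow> inj (sact p s)"
  by (metis injI sact_inv1)

lemma Nm_inj: "j \<in> J4 \<Longrightarrow> inj ((*v) (Nm j))"
  using det_Nm_nz by (simp add: inj_matrix_vector_mult invertible_det_nz)

lemma Qp_comp: "Qp ps j = (sact (fst ps) (snd ps) \<circ> (*v) (Nm j)) ` Std"
  by (simp add: Qp_def comp_def)

lemma Dp_comp: "Dp ps j = (sact (fst ps) (snd ps) \<circ> (*v) (Mm j)) ` Std"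
  by (simp add: Dp_def comp_def)

lemma compact_lin_Std: "compact ((*v) A ` Std)"
  using compact_Std by (intro compact_continuous_image continuous_intros)

lemma measure_lin_Std: "measure lebesgue ((*v) A ` Std) = \<bar>det A\<bar> / 6"
proof -
  have "measure lebesgue ((*v) A ` Std) = \<bar>det (matrix ((*v) A))\<bar> * measure lebesgue Std"
    by (rule measure_lebesgue_linear_transformation[OF compact_imp_bounded[OF compact_Std]
          fmeasurableD[OF lmeasurable_compact[OF compact_Std]] matrix_vector_mul_linear])
  then show ?thesis by (simp add: measure_Std matrix_of_matrix_vector_mul)
qed

lemma measure_sact_lin: "bij p \<Longrightarrow> measure lebesgue ((sact p s \<circ> (*v) A) ` Std) = \<bar>det A\<bar> / 6"
proof -
  assume p: "bij p"
  have "measure lebesgue ((sact p s \<circ> (*v) A) ` Std) = measure lebesgue (sact p s ` ((*v) A ` Std))"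
    by (simp add: image_comp)
  also have "\<dots> = measure lebesgue ((*v) A ` Std)"
    by (rule measure_orthogonal_image[OF orth_sact[OF p]]) (rule lmeasurable_compact[OF compact_lin_Std])
  finally show ?thesis by (simp add: measure_lin_Std)
qed

lemma compact_sact_lin: "compact ((sact p s \<circ> (*v) A) ` Std)"
  by (intro compact_continuous_image compact_Std cont_linear linear_compose matrix_vector_mul_linear linear_sact)

lemma measure_Qp: "ps \<in> Grp \<Longrightarrow> measure lebesgue (Qp ps j) = \<bar>det (Nm j)\<bar> / 6"
  unfolding Qp_comp Grp_def by (rule measure_sact_lin) simp

lemma measure_Dp: "ps \<in> Grp \<Longrightarrow> measure lebesgue (Dp ps j) = \<bar>det (Mm j)\<bar> / 6"
  unfolding Dp_comp Grp_def by (rule measure_sact_lin) simp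

lemma compact_Dp: "compact (Dp ps j)" unfolding Dp_comp by (rule compact_sact_lin)
lemma compact_Qp: "compact (Qp ps j)" unfolding Qp_comp by (rule compact_sact_lin)

definition N0 :: "(real^3) set" where
  "N0 = {x. \<exists>i. x$i = 0} \<union> {x. \<exists>i k. i \<noteq> k \<and> (x$i = x$k \<or> x$i = - x$k)}"

lemma negligible_N0: "negligible N0"
proof -
  define H where "H = (\<lambda>i. {x::real^3. axis i 1 \<bullet> x = 0}) ` UNIV
     \<union> (\<lambda>ik. {x::real^3. (axis (fst ik) 1 - axis (snd ik) 1) \<bullet> x = 0}) ` {ik. fst ik \<noteq> snd ik}
     \<union> (\<lambda>ik. {x::real^3. (axis (fst ik) 1 + axis (snd ik) 1) \<bullet> x = 0}) ` {ik. fst ik \<noteq> snd ik}"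
  have "finite H" unfolding H_def by simp
  moreover have "negligible h" if "h \<in> H" for h
  proof -
    have ne: "axis i (1::real) - axis k 1 \<noteq> 0" "axis i (1::real) + axis k 1 \<noteq> 0" if "i \<noteq> k" for i k :: 3
      using that by (auto simp: vec_eq_iff axis_def)
    show ?thesis using that ne unfolding H_def
      by (auto intro!: negligible_hyperplane simp: axis_eq_0_iff)
  qed
  ultimately have "negligible (\<Union>H)" by (rule negligible_Union)
  moreover have "N0 \<subseteq> \<Union>H"
  proof
    fix x assume "x \<in> N0"
    then consider i where "x$i = 0" | i k where "i \<noteq> k" "x$i = x$k" | i k where "i \<noteq> k" "x$i = - x$k"
      unfolding N0_def by blast
    then show "x \<in> \<Union>H"
    proof cases
      case 1
      have "{x::real^3. axis i 1 \<bullet> x = 0} \<in> H" unfolding H_def by blast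
      moreover have "x \<in> {x::real^3. axis i 1 \<bullet> x = 0}" using 1 by (simp add: inner_axis')
      ultimately show ?thesis by blast
    next
      case 2
      have "{x::real^3. (axis (fst (i,k)) 1 - axis (snd (i,k)) 1) \<bullet> x = 0} \<in> H"
        unfolding H_def by (rule UnI1, rule UnI2, rule imageI) (use 2 in simp)
      moreover have "x \<in> {x::real^3. (axis (fst (i,k)) 1 - axis (snd (i,k)) 1) \<bullet> x = 0}"
        using 2 by (simp add: inner_axis' inner_diff_left)
      ultimately show ?thesis by blast
    next
      case 3
      have "{x::real^3. (axis (fst (i,k)) 1 + axis (snd (i,k)) 1) \<bullet> x = 0} \<in> H"
        unfolding H_def by (rule UnI2, rule imageI) (use 3 in simp)
      moreover have "x \<in> {x::real^3. (axis (fst (i,k)) 1 + axis (snd (i,k)) 1) \<bullet> x = 0}"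
        using 3 by (simp add: inner_axis' inner_add_left)
      ultimately show ?thesis by blast
    qed
  qed
  ultimately show ?thesis by (rule negligible_subset)
qed

lemma sector_overlap:
  assumes p: "bij p" and q: "bij q" and ne: "(p, s) \<noteq> (q, t)" and y: "y \<in> Fd" and y': "y' \<in> Fd"
    and eq: "sact p s y = sact q t y'"
  shows "sact p s y \<in> N0"
proof -
  note r = rep_lemma[OF y y' p q eq]
  have "p \<noteq> q \<or> s \<noteq> t" using ne by auto
  then obtain i where i: "p i \<noteq> q i \<or> s i \<noteq> t i" by (auto simp: fun_eq_iff)
  show ?thesis
  proof (cases "s i \<noteq> t i")
    case True
    then have "y $ p i = 0" using r by blast
    then show ?thesis unfolding N0_def by auto
  next
    case False
    then have pq: "p i \<noteq> q i" using i by simp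
    define k where "k = inv p (q i)"
    have pk: "p k = q i" unfolding k_def using p by (simp add: bij_is_surj surj_f_inv_f)
    have ki: "k \<noteq> i" using pk pq by auto
    have "y $ p k = y $ p i" using r(2)[of i] pk by simp
    then have e: "sact p s y $ i = sact p s y $ k \<or> sact p s y $ i = - (sact p s y $ k)"
      by auto
    have "sact p s y \<in> {x. \<exists>i k. i \<noteq> k \<and> (x$i = x$k \<or> x$i = - x$k)}"
      using e ki by (intro CollectI exI[of _ i] exI[of _ k]) auto
    then show ?thesis unfolding N0_def by (rule UnI2)
  qed
qed

lemma Nm_Fd: "j \<in> J4 \<Longrightarrow> l \<in> Std \<Longrightarrow> Nm j *v l \<in> Fd"
  using piece[of j l] G0_Fd by metis

lemma inner3: "(a::real^3) \<bullet> z = a$1 * z$1 + a$2 * z$2 + a$3 * z$3"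
  by (simp add: inner_vec_def sum_3)

lemma sep1: "l \<in> Std \<Longrightarrow> 0 \<le> 5 * (Nm 1 *v l)$3 - 28 * (Nm 1 *v l)$2"
  unfolding Std_iff by (simp add: Nm_def cols3_mult vdefs field_simps)
lemma sep1': "j \<in> {2,3,4} \<Longrightarrow> l \<in> Std \<Longrightarrow> 5 * (Nm j *v l)$3 - 28 * (Nm j *v l)$2 \<le> 0"
  unfolding Std_iff by (auto simp: Nm_def cols3_mult vdefs field_simps)
lemma sep2: "l \<in> Std \<Longrightarrow> 460 * (Nm 2 *v l)$1 - 532 * (Nm 2 *v l)$2 + 95 * (Nm 2 *v l)$3 \<le> 0"
  unfolding Std_iff by (simp add: Nm_def cols3_mult vdefs field_simps)
lemma sep2': "l \<in> Std \<Longrightarrow> 0 \<le> 460 * (Nm 3 *v l)$1 - 532 * (Nm 3 *v l)$2 + 95 * (Nm 3 *v l)$3"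
  unfolding Std_iff by (simp add: Nm_def cols3_mult vdefs field_simps)
lemma sep3: "j \<in> {2,3} \<Longrightarrow> l \<in> Std \<Longrightarrow> 0 \<le> 432 * (Nm j *v l)$2 + 5 * (Nm j *v l)$3 - 460 * (Nm j *v l)$1"
  unfolding Std_iff by (auto simp: Nm_def cols3_mult vdefs field_simps)
lemma sep3': "l \<in> Std \<Longrightarrow> 432 * (Nm 4 *v l)$2 + 5 * (Nm 4 *v l)$3 - 460 * (Nm 4 *v l)$1 \<le> 0"
  unfolding Std_iff by (simp add: Nm_def cols3_mult vdefs field_simps)

lemma within_sector:
  assumes j: "j \<in> J4" "j' \<in> J4" "j \<noteq> j'"
  shows "\<exists>a. a \<noteq> 0 \<and> (*v) (Nm j) ` Std \<inter> (*v) (Nm j') ` Std \<subseteq> {z. a \<bullet> z = 0}"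
proof -
  define a1 where "a1 = (vector [0, -28, 5] :: real^3)"
  define a2 where "a2 = (vector [460, -532, 95] :: real^3)"
  define a3 where "a3 = (vector [-460, 432, 5] :: real^3)"
  have nz: "a1 \<noteq> 0" "a2 \<noteq> 0" "a3 \<noteq> 0" by (auto simp: a1_def a2_def a3_def vec_eq_iff forall_3)
  have i1: "a1 \<bullet> z = 5 * z$3 - 28 * z$2" "a2 \<bullet> z = 460 * z$1 - 532 * z$2 + 95 * z$3"
    "a3 \<bullet> z = 432 * z$2 + 5 * z$3 - 460 * z$1" for z
    by (simp_all add: inner3 a1_def a2_def a3_def)
  have c1: "(*v) (Nm 1) ` Std \<inter> (*v) (Nm k) ` Std \<subseteq> {z. a1 \<bullet> z = 0}" if "k \<in> {2,3,4}" for k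
    using sep1 sep1'[OF that] by (force simp: i1)
  have c2: "(*v) (Nm 2) ` Std \<inter> (*v) (Nm 3) ` Std \<subseteq> {z. a2 \<bullet> z = 0}"
    using sep2 sep2' by (force simp: i1)
  have c3: "(*v) (Nm k) ` Std \<inter> (*v) (Nm 4) ` Std \<subseteq> {z. a3 \<bullet> z = 0}" if "k \<in> {2,3}" for k
    using sep3[OF that] sep3' by (force simp: i1)
  consider "j = 1" "j' \<in> {2,3,4}" | "j' = 1" "j \<in> {2,3,4}" | "j = 2" "j' = 3" | "j = 3" "j' = 2"
    | "j \<in> {2,3}" "j' = 4" | "j' \<in> {2,3}" "j = 4"
    using j unfolding J4_def by auto
  then show ?thesis
  proof cases
    case 1 then show ?thesis using c1 nz by blast
  next
    case 2 then show ?thesis using c1[of j] nz by blast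
  next
    case 3 then show ?thesis using c2 nz by blast
  next
    case 4 then show ?thesis using c2 nz by blast
  next
    case 5 then show ?thesis using c3[of j] nz by blast
  next
    case 6 then show ?thesis using c3[of j'] nz by blast
  qed
qed

lemma Qp_pairwise:
  assumes i: "i \<in> Idx" "i' \<in> Idx" "i \<noteq> i'"
  shows "negligible (Qp (fst i) (snd i) \<inter> Qp (fst i') (snd i'))"
proof -
  obtain p s j where ii: "i = ((p, s), j)" "bij p" "j \<in> J4" using i by (auto simp: Idx_def Grp_def)
  obtain q t j' where ii': "i' = ((q, t), j')" "bij q" "j' \<in> J4" using i by (auto simp: Idx_def Grp_def)
  show ?thesis
  proof (cases "(p, s) = (q, t)")
    case False
    have "Qp (fst i) (snd i) \<inter> Qp (fst i') (snd i') \<subseteq> N0"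
    proof
      fix x assume "x \<in> Qp (fst i) (snd i) \<inter> Qp (fst i') (snd i')"
      then obtain l l' where "l \<in> Std" "l' \<in> Std" "x = sact p s (Nm j *v l)" "x = sact q t (Nm j' *v l')"
        using ii ii' by (auto simp: Qp_def)
      then show "x \<in> N0" using sector_overlap[OF ii(2) ii'(2) False] Nm_Fd ii ii' by metis
    qed
    then show ?thesis using negligible_N0 negligible_subset by blast
  next
    case True
    then have jj: "j \<noteq> j'" "q = p" "t = s" using i ii ii' by auto
    obtain a where a: "a \<noteq> 0" "(*v) (Nm j) ` Std \<inter> (*v) (Nm j') ` Std \<subseteq> {z. a \<bullet> z = 0}"
      using within_sector[OF ii(3) ii'(3) jj(1)] by blast
    have "Qp (fst i) (snd i) \<inter> Qp (fst i') (snd i') \<subseteq> {x. sact p s a \<bullet> x = 0}"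
    proof
      fix x assume "x \<in> Qp (fst i) (snd i) \<inter> Qp (fst i') (snd i')"
      then obtain l l' where l: "l \<in> Std" "l' \<in> Std" "x = sact p s (Nm j *v l)" "x = sact p s (Nm j' *v l')"
        using ii ii' jj by (auto simp: Qp_def)
      then have "Nm j *v l = Nm j' *v l'" using sact_inj[OF ii(2)] by (metis injD)
      then have "a \<bullet> (Nm j *v l) = 0" using a(2) l by blast
      then show "x \<in> {x. sact p s a \<bullet> x = 0}" using l inner_sact[OF ii(2)] by simp
    qed
    moreover have "sact p s a \<noteq> 0" using a(1) norm_sact[OF ii(2), of s a] by auto
    ultimately show ?thesis using negligible_hyperplane negligible_subset by blast
  qed
qed

lemma measure_C0: "measure lebesgue C0 = 1"
proof -
  have "measure lebesgue C0 = measure lborel C0"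
    unfolding C0_def by (intro measure_completion) auto
  also have "\<dots> = 1" unfolding C0_def
    by (simp add: measure_lborel_cbox_eq Basis3 inner_axis eucl_le[where 'a="real^3"] axis_eq_axis hc_def)
  finally show ?thesis .
qed

lemma sum_Idx: "(\<Sum>i\<in>Idx. f (snd i)) = real (card Grp) * (\<Sum>j\<in>J4. f j)"
proof -
  have "(\<Sum>ps\<in>Grp. \<Sum>j\<in>J4. f j) = (\<Sum>(ps, j)\<in>Grp \<times> J4. f j)" by (rule sum.cartesian_product)
  also have "\<dots> = (\<Sum>i\<in>Idx. f (snd i))" unfolding Idx_def by (rule sum.cong) auto
  finally show ?thesis by simp
qed

lemma sumJ4: "(\<Sum>j\<in>J4. f j) = f 1 + f 2 + f 3 + f 4"
  by (simp add: J4_def add.assoc)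

lemma sumNm: "(\<Sum>j\<in>J4. \<bar>det (Nm j)\<bar> / 6) = 9173 / 383328"
proof -
  have "(\<Sum>j\<in>J4. \<bar>det (Nm j)\<bar> / 6) = \<bar>det (Nm 1)\<bar> / 6 + \<bar>det (Nm 2)\<bar> / 6 + \<bar>det (Nm 3)\<bar> / 6 + \<bar>det (Nm 4)\<bar> / 6"
    by (simp only: sumJ4)
  also have "\<dots> = 9173 / 383328" unfolding det_Nm by simp
  finally show ?thesis .
qed

lemma sumMm: "(\<Sum>j\<in>J4. \<bar>det (Mm j)\<bar> / 6) = 1 / 48"
proof -
  have "(\<Sum>j\<in>J4. \<bar>det (Mm j)\<bar> / 6) = \<bar>det (Mm 1)\<bar> / 6 + \<bar>det (Mm 2)\<bar> / 6 + \<bar>det (Mm 3)\<bar> / 6 + \<bar>det (Mm 4)\<bar> / 6"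
    by (simp only: sumJ4)
  also have "\<dots> = 1 / 48" unfolding det_Mm by simp
  finally show ?thesis .
qed

lemma measure_P: "measure lebesgue (Gmap ` C0) > 1"
proof -
  have "measure lebesgue (Gmap ` C0) = (\<Sum>i\<in>Idx. measure lebesgue (Qp (fst i) (snd i)))"
    unfolding Gmap_C0
  proof (rule measure_negligible_finite_Union_image[OF finite_Idx])
    show "Qp (fst i) (snd i) \<in> lmeasurable" if "i \<in> Idx" for i
      unfolding Qp_comp by (rule lmeasurable_compact[OF compact_sact_lin])
    show "pairwise (\<lambda>i i'. negligible (Qp (fst i) (snd i) \<inter> Qp (fst i') (snd i'))) Idx"
      unfolding pairwise_def using Qp_pairwise by blast
  qed
  also have "\<dots> = (\<Sum>i\<in>Idx. \<bar>det (Nm (snd i))\<bar> / 6)"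
    by (rule sum.cong) (auto simp: Idx_def measure_Qp)
  also have "\<dots> = real (card Grp) * (9173 / 383328)"
    using sum_Idx[of "\<lambda>j. \<bar>det (Nm j)\<bar> / 6"] sumNm by simp
  finally have mP: "measure lebesgue (Gmap ` C0) = real (card Grp) * (9173 / 383328)" .
  have "1 = measure lebesgue C0" by (simp add: measure_C0)
  also have "\<dots> \<le> (\<Sum>i\<in>Idx. measure lebesgue (Dp (fst i) (snd i)))"
    unfolding C0_cover[symmetric]
  proof -
    have "measure lebesgue (\<Union>i\<in>Idx. Dp (fst i) (snd i)) \<le> (\<Sum>i\<in>Idx. measure lebesgue (Dp (fst i) (snd i)))"
      by (rule measure_UNION_le[OF finite_Idx]) (auto intro!: fmeasurableD lmeasurable_compact compact_Dp)
    then show "measure lebesgue C0 \<le> (\<Sum>i\<in>Idx. measure lebesgue (Dp (fst i) (snd i)))"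
      using C0_cover by simp
  qed
  also have "\<dots> = (\<Sum>i\<in>Idx. \<bar>det (Mm (snd i))\<bar> / 6)"
    by (rule sum.cong) (auto simp: Idx_def measure_Dp)
  also have "\<dots> = real (card Grp) * (1 / 48)"
    using sum_Idx[of "\<lambda>j. \<bar>det (Mm j)\<bar> / 6"] sumMm by simp
  finally have "48 \<le> real (card Grp)" by simp
  then show ?thesis unfolding mP by simp
qed


lemma not_convex_P: "\<not> convex (Gmap ` C0)"
proof
  assume cv: "convex (Gmap ` C0)"
  have vvF: "vv \<in> Fd" by (simp add: vv_def Fd_def)
  have vvS3: "vv \<in> S3" by (simp add: vv_def S3_def Fd_def)
  have G0vv: "G0 vv = wv"
    using G0_S3[OF vvS3] by (simp add: L3_def vv_def wv_def vec_eq_iff forall_3)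
  have vvC: "vv \<in> C0" by (simp add: C0_iff vv_def forall_3)
  define s1 where "s1 = (\<lambda>i::3. i = 1)"
  have bid: "bij (id :: 3 \<Rightarrow> 3)" by simp
  have x1: "wv \<in> Gmap ` C0" using Gmap_Fd[OF vvF] G0vv vvC by (metis image_eqI)
  have "Gmap (sact id s1 vv) = sact id s1 wv" using Gmap_sact[OF bid vvF] G0vv by simp
  moreover have "sact id s1 vv \<in> C0" using sact_C0[OF bid] vvC by simp
  ultimately have x2: "sact id s1 wv \<in> Gmap ` C0" by (metis image_eqI)
  define u where "u = (vector [0, 8/15, 8/15] :: real^3)"
  have uF: "u \<in> Fd" by (simp add: u_def Fd_def)
  have "G0 u = vector [0, 16/33, 16/33]"
    by (simp add: G0_def u_def L2_def vec_eq_iff forall_3)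
  moreover have "(1/2) *\<^sub>R wv + (1/2) *\<^sub>R sact id s1 wv = (vector [0, 16/33, 16/33] :: real^3)"
    by (simp add: wv_def s1_def vec_eq_iff forall_3)
  ultimately have mid: "(1/2) *\<^sub>R wv + (1/2) *\<^sub>R sact id s1 wv = Gmap u" using Gmap_Fd[OF uF] by simp
  have "(1/2) *\<^sub>R wv + (1/2) *\<^sub>R sact id s1 wv \<in> Gmap ` C0"
    by (rule convexD[OF cv x1 x2]) auto
  then obtain z where z: "z \<in> C0" "Gmap z = Gmap u" using mid by auto
  then have "z = u" using Gmap_inj by (auto dest: injD)
  then show False using z(1) by (simp add: C0_iff u_def forall_3)
qed

lemma compact_Ep: "compact (Ep ps j)"
proof -
  have "compact (Std \<inter> {l::real^3. l$1 + l$2 + l$3 = 1})"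
    by (intro compact_Int_closed compact_Std closed_Collect_eq continuous_intros)
  then have "compact ((sact (fst ps) (snd ps) \<circ> (*v) (Mm j)) ` (Std \<inter> {l. l$1 + l$2 + l$3 = 1}))"
    by (intro compact_continuous_image cont_linear linear_compose matrix_vector_mul_linear linear_sact)
  then show ?thesis by (simp add: Ep_def comp_def)
qed

lemma unit_cube_eq: "unit_cube3 = (+) hc ` C0"
proof (rule set_eqI)
  fix x :: "real^3"
  have e: "(0 \<le> a \<and> a \<le> 1) \<longleftrightarrow> \<bar>a - 1/2\<bar> \<le> (1::real)/2" for a by (simp only: abs_le_iff) auto
  have c: "(x - hc) $ i = x $ i - 1/2" for i by (simp add: hc_def)
  have "x \<in> unit_cube3 \<longleftrightarrow> x - hc \<in> C0"
    unfolding unit_cube3_def mem_Collect_eq C0_iff c e ..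
  also have "\<dots> \<longleftrightarrow> x \<in> (+) hc ` C0"
    by (auto simp: image_iff) (metis add.commute diff_add_cancel)
  finally show "x \<in> unit_cube3 \<longleftrightarrow> x \<in> (+) hc ` C0" .
qed

theorem mainTheorem1:
  shows "\<exists>P :: (real^3) set. polyhedron3 P \<and> \<not> convex P \<and>
           intrinsically_isometric (frontier P) (frontier unit_cube3) \<and>
           measure lebesgue P > 1"
proof -
  define P where "P = Gmap ` C0"
  have poly: "polyhedron3 P"
    unfolding polyhedron3_def
  proof (intro exI[of _ "(\<lambda>i. Qp (fst i) (snd i)) ` Idx"] conjI ballI)
    show "finite ((\<lambda>i. Qp (fst i) (snd i)) ` Idx)" using finite_Idx by simp
    have "((id, \<lambda>_. False), 1) \<in> Idx" by (simp add: Idx_def Grp_def J4_def)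
    then show "(\<lambda>i. Qp (fst i) (snd i)) ` Idx \<noteq> {}" by blast
    show "P = \<Union> ((\<lambda>i. Qp (fst i) (snd i)) ` Idx)" unfolding P_def Gmap_C0 by simp
    fix Q assume "Q \<in> (\<lambda>i. Qp (fst i) (snd i)) ` Idx"
    then obtain p s j where pj: "bij p" "j \<in> J4" "Q = Qp (p, s) j" by (auto simp: Idx_def Grp_def)
    have lin: "linear (sact p s \<circ> (*v) (Nm j))"
      by (intro linear_compose matrix_vector_mul_linear linear_sact)
    have inj: "inj (sact p s \<circ> (*v) (Nm j))"
      by (intro inj_compose sact_inj Nm_inj pj)
    show "polytope Q" unfolding pj Qp_comp fst_conv snd_conv by (rule polytope_linear_image[OF lin polytope_Std])
    show "aff_dim Q = 3" unfolding pj Qp_comp fst_conv snd_conv aff_dim_injective_linear_image[OF lin inj]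
      by (rule aff_dim_Std)
  qed
  have nc: "\<not> convex P" unfolding P_def by (rule not_convex_P)
  have FU: "frontier unit_cube3 = (+) hc ` frontier C0" by (simp add: unit_cube_eq frontier_translation)
  have FP: "frontier P = Gmap ` frontier C0" unfolding P_def
    by (rule frontier_image_inj[OF Gmap_cont Gmap_inj]) (simp add: C0_def)
  have iso: "intrinsically_isometric (frontier P) (frontier unit_cube3)"
  proof (rule pw_iso_intrinsically_isometric[where h = "\<lambda>x. Gmap (x - hc)"
        and \<A> = "(\<lambda>i. (+) hc ` Ep (fst i) (snd i)) ` Idx"])
    show "bij_betw (\<lambda>x. Gmap (x - hc)) (frontier unit_cube3) (frontier P)"
    proof (rule bij_betw_imageI)
      show "inj_on (\<lambda>x. Gmap (x - hc)) (frontier unit_cube3)"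
        unfolding inj_on_def using Gmap_inj by (metis injD diff_add_cancel)
      show "(\<lambda>x. Gmap (x - hc)) ` frontier unit_cube3 = frontier P"
        unfolding FU FP by (simp add: image_image)
    qed
    show "finite ((\<lambda>i. (+) hc ` Ep (fst i) (snd i)) ` Idx)" using finite_Idx by simp
    show "\<Union> ((\<lambda>i. (+) hc ` Ep (fst i) (snd i)) ` Idx) = frontier unit_cube3"
      unfolding FU frontier_cover by (simp add: image_UN)
    show "compact A" if "A \<in> (\<lambda>i. (+) hc ` Ep (fst i) (snd i)) ` Idx" for A
      using that compact_translation[OF compact_Ep] by auto
    show "dist (Gmap (x - hc)) (Gmap (y - hc)) = dist x y"
      if H: "A \<in> (\<lambda>i. (+) hc ` Ep (fst i) (snd i)) ` Idx" "x \<in> A" "y \<in> A" for A x y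
    proof -
      obtain i where i: "i \<in> Idx" "A = (+) hc ` Ep (fst i) (snd i)" using H(1) by blast
      obtain x' y' where xy: "x' \<in> Ep (fst i) (snd i)" "y' \<in> Ep (fst i) (snd i)" "x = hc + x'" "y = hc + y'"
        using H(2,3) i by blast
      have "dist (Gmap (x - hc)) (Gmap (y - hc)) = dist (Gmap x') (Gmap y')" using xy by simp
      also have "\<dots> = dist x' y'" by (rule Ep_iso[OF i(1) xy(1,2)])
      also have "\<dots> = dist x y" using xy by (simp add: dist_norm)
      finally show ?thesis .
    qed
  qed
  have meas: "measure lebesgue P > 1" unfolding P_def by (rule measure_P)
  show ?thesis using poly nc iso meas by blast
qed


end
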